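(* Let $\gamma>0$, $k>1$ an integer, $1\le c_0\le 2$, and $$\eta_{k,\gamma,c_0}=\min\left\{u\in(0,1):\ c_0\left(1-\left(\frac{u}{2k}\right)^{1/k}\right)^\gamma+\left(1-\frac{u}{2k}\right)^\gamma\le 1\right\}.$$ Then $$\eta_{k,\gamma,c_0}\le\min\left\{u\in(0,1):\ \log c_0+\gamma\log\log\frac{2k}{u}-\gamma\log k+\log\left(1+\frac{2k}{u\gamma}\right)\le 0\right\}.$$
   Context: In the paper $\gamma=(1-\alpha)/\alpha$ for a stability index $0<\alpha<1$. *)

theory Defs
  imports Complex_Main
begin

definition eta_set :: "nat \<Rightarrow> real \<Rightarrow> real \<Rightarrow> real set" where
  "eta_set k \<gamma> c0 = {u. 0 < u \<and> u < 1 \<and>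
     c0 * (1 - (u / (2 * real k)) powr (1 / real k)) powr \<gamma>
       + (1 - u / (2 * real k)) powr \<gamma> \<le> 1}"

definition bound_set :: "nat \<Rightarrow> real \<Rightarrow> real \<Rightarrow> real set" where
  "bound_set k \<gamma> c0 = {u. 0 < u \<and> u < 1 \<and>
     ln c0 + \<gamma> * ln (ln (2 * real k / u)) - \<gamma> * ln (real k)
       + ln (1 + 2 * real k / (u * \<gamma>)) \<le> 0}"

end

theory Submission
  imports Defs "HOL-Analysis.Analysis"
begin

lemma h1:
  fixes x k :: real assumes "0 < x" "0 < k"
  shows "1 - x powr (1/k) \<le> ln (1/x) / k"
proof -
  have "x powr (1/k) = exp (ln x / k)" using assms by (simp add: powr_def)
  moreover have "1 + ln x / k \<le> exp (ln x / k)" by (rule exp_ge_add_one_self)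
  moreover have "ln (1/x) = - ln x" using assms by (simp add: ln_div)
  ultimately have "1 - x powr (1/k) \<le> - ln x / k" by (simp only:)
  thus ?thesis using \<open>ln (1/x) = - ln x\<close> by simp
qed

lemma h2:
  fixes x g :: real assumes "0 < x" "x < 1" "0 < g"
  shows "(1 - x) powr g \<le> 1 / (1 + g * x)"
proof -
  have "ln (1 - x) \<le> - x" using ln_le_minus_one[of "1 - x"] assms by simp
  hence "g * ln (1 - x) \<le> g * (- x)" using assms by (intro mult_left_mono) auto
  hence "(1 - x) powr g \<le> exp (- (g * x))" using assms by (simp add: powr_def)
  also have "\<dots> = 1 / exp (g * x)" by (simp add: exp_minus field_simps)
  also have "\<dots> \<le> 1 / (1 + g * x)"
    using exp_ge_add_one_self[of "g*x"] assms by (intro divide_left_mono) (auto intro!: mult_pos_pos add_pos_pos)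
  finally show ?thesis .
qed

lemma aux: fixes P a :: real assumes "0 < a" "P * (1 + 1/a) \<le> 1" shows "P \<le> a/(1+a)"
proof -
  have "1 + 1/a = (1+a)/a" using assms(1) by (simp add: field_simps)
  hence "P * (1+a) \<le> a" using assms by (simp add: mult_le_cancel_right pos_divide_le_eq mult.assoc[symmetric] times_divide_eq_right)
  thus ?thesis using assms(1) by (simp add: pos_le_divide_eq)
qed

lemma aux2: fixes a :: real assumes "0 < a" shows "1/(1+a) = 1 - a/(1+a)"
  using assms by (simp add: field_simps)

lemma main_ineq:
  fixes k :: nat and \<gamma> c0 u :: real
  assumes "\<gamma> > 0" and "k > 1" and "1 \<le> c0" and "u \<in> bound_set k \<gamma> c0"
  shows "u \<in> eta_set k \<gamma> c0"
proof -
  from assms(4) have u: "0 < u" "u < 1" and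
    b: "ln c0 + \<gamma> * ln (ln (2 * real k / u)) - \<gamma> * ln (real k)
       + ln (1 + 2 * real k / (u * \<gamma>)) \<le> 0" by (auto simp: bound_set_def)
  define x where "x = u / (2 * real k)"
  have kpos: "real k > 1" using assms by simp
  have x: "0 < x" "x < 1" using u kpos by (auto simp: x_def field_simps)
  define L where "L = ln (1/x)"
  have L1: "2 * real k / u = 1/x" by (simp add: x_def)
  have L2: "2 * real k / (u * \<gamma>) = 1/(x*\<gamma>)" by (simp add: x_def)
  have Lpos: "L > 0" unfolding L_def using x by simp
  have "1/(x*\<gamma>) > 0" using x assms(1) by simp
  hence "1 + 1/(x*\<gamma>) > 0" by linarith
  have "ln (c0 * (L/k) powr \<gamma> * (1 + 1/(x*\<gamma>))) = ln c0 + \<gamma> * ln L - \<gamma> * ln (real k) + ln (1 + 1/(x*\<gamma>))"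
    using Lpos kpos assms(1,3) x \<open>1 + 1/(x*\<gamma>) > 0\<close> by (simp add: ln_mult ln_div ln_powr right_diff_distrib)
  also have "\<dots> \<le> 0" using b L1 L2 by (simp add: L_def)
  finally have "c0 * (L/k) powr \<gamma> * (1 + 1/(x*\<gamma>)) \<le> 1"
    using Lpos kpos assms(1,3) x \<open>1 + 1/(x*\<gamma>) > 0\<close> by (subst (asm) ln_le_zero_iff) (auto intro!: mult_pos_pos)
  hence A: "c0 * (L/k) powr \<gamma> \<le> \<gamma> * x / (1 + \<gamma> * x)"
  proof -
    have "0 < \<gamma> * x" using x assms(1) by simp
    moreover have "c0 * (L/k) powr \<gamma> * (1 + 1/(\<gamma> * x)) \<le> 1"
      using \<open>c0 * (L/k) powr \<gamma> * (1 + 1/(x*\<gamma>)) \<le> 1\<close> by (simp only: mult.commute[of x])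
    ultimately show ?thesis by (rule aux)
  qed
  have B: "(1 - x powr (1/k)) powr \<gamma> \<le> (L/k) powr \<gamma>"
  proof (rule powr_mono2)
    have "x powr (1/k) \<le> 1" using x kpos by (intro powr_le1) auto
    thus "0 \<le> 1 - x powr (1/k)" by simp
    show "1 - x powr (1/k) \<le> L/k" using h1[of x "real k"] x kpos by (simp add: L_def)
  qed (use assms in auto)
  have C: "(1 - x) powr \<gamma> \<le> 1 - \<gamma> * x / (1 + \<gamma> * x)"
  proof -
    have "0 < \<gamma> * x" using x assms(1) by simp
    hence "1 / (1 + \<gamma> * x) = 1 - \<gamma> * x / (1 + \<gamma> * x)" by (rule aux2)
    thus ?thesis using h2[of x \<gamma>] x assms(1) by (simp only: mult.commute[of x])
  qed
  have "c0 * (1 - x powr (1/k)) powr \<gamma> \<le> c0 * (L/k) powr \<gamma>"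
    using B assms(3) by simp
  hence "c0 * (1 - x powr (1/k)) powr \<gamma> + (1 - x) powr \<gamma> \<le> 1" using A C by linarith
  thus ?thesis using u unfolding eta_set_def mem_Collect_eq x_def[symmetric] by blast
qed

theorem lemma5:
  fixes k :: nat and \<gamma> c0 m :: real
  assumes "\<gamma> > 0" and "k > 1" and "1 \<le> c0" and "c0 \<le> 2"
    and "m \<in> bound_set k \<gamma> c0" and "\<forall>u\<in>bound_set k \<gamma> c0. m \<le> u"
  shows "\<exists>\<eta>. \<eta> \<in> eta_set k \<gamma> c0 \<and> (\<forall>u\<in>eta_set k \<gamma> c0. \<eta> \<le> u) \<and> \<eta> \<le> m"
proof -
  define f where "f = (\<lambda>u::real. c0 * (1 - (u / (2 * real k)) powr (1 / real k)) powr \<gamma>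
       + (1 - u / (2 * real k)) powr \<gamma>)"
  have kpos: "real k > 1" using assms by simp
  have m: "0 < m" "m < 1" using assms(5) by (auto simp: bound_set_def)
  have mE: "m \<in> eta_set k \<gamma> c0" using main_ineq assms by blast
  have sub: "\<And>u. u \<in> {0..m} \<Longrightarrow> 0 < 1 - (u / (2 * real k)) powr (1 / real k)"
  proof -
    fix u assume "u \<in> {0..m}"
    hence "0 \<le> u / (2 * real k)" "u / (2 * real k) < 1" using m kpos by (auto simp: field_simps)
    hence "(u / (2 * real k)) powr (1 / real k) < 1 powr (1 / real k)" using kpos by (intro powr_less_mono2) auto
    thus "0 < 1 - (u / (2 * real k)) powr (1 / real k)" by simp
  qed
  have c1: "continuous_on {0..m} (\<lambda>u. (u / (2 * real k)) powr (1 / real k))"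
    by (rule continuous_on_powr') (use kpos in \<open>auto intro!: continuous_intros\<close>)
  have c2: "continuous_on {0..m} (\<lambda>u. (1 - (u / (2 * real k)) powr (1 / real k)) powr \<gamma>)"
    by (rule continuous_on_powr') (use c1 sub assms(1) in \<open>auto intro!: continuous_intros less_imp_le\<close>)
  have c3: "continuous_on {0..m} (\<lambda>u. (1 - u / (2 * real k)) powr \<gamma>)"
  proof (rule continuous_on_powr')
    show "\<forall>x\<in>{0..m}. 0 \<le> 1 - x / (2 * real k) \<and> (1 - x / (2 * real k) = 0 \<longrightarrow> 0 < \<gamma>)"
    proof
      fix x assume "x \<in> {0..m}"
      hence "x \<le> 2 * real k" using m kpos by auto
      hence "x / (2 * real k) \<le> 1" using kpos by simp
      thus "0 \<le> 1 - x / (2 * real k) \<and> (1 - x / (2 * real k) = 0 \<longrightarrow> 0 < \<gamma>)"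
        using assms(1) by simp
    qed
  qed (use kpos in \<open>auto intro!: continuous_intros\<close>)
  have cont: "continuous_on {0..m} f" unfolding f_def
    by (intro continuous_intros c2 c3)
  define S where "S = {0..m} \<inter> f -` {..1}"
  have cl: "closed S" unfolding S_def
    by (rule continuous_closed_preimage[OF cont]) auto
  have mS: "m \<in> S" using mE m by (auto simp: S_def eta_set_def f_def)
  have bb: "bdd_below S" unfolding S_def by (rule bdd_belowI[of _ 0]) auto
  define \<eta> where "\<eta> = Inf S"
  have eS: "\<eta> \<in> S" unfolding \<eta>_def using closed_contains_Inf[OF _ bb cl] mS by blast
  have f0: "f 0 = c0 + 1" using kpos by (simp add: f_def)
  have ne0: "\<eta> \<noteq> 0" using eS f0 assms(3) by (auto simp: S_def)
  have em: "\<eta> \<le> m" unfolding \<eta>_def by (rule cInf_lower[OF mS bb])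
  have eE: "\<eta> \<in> eta_set k \<gamma> c0" using eS ne0 em m by (auto simp: S_def eta_set_def f_def)
  have "\<forall>u\<in>eta_set k \<gamma> c0. \<eta> \<le> u"
  proof
    fix u assume u: "u \<in> eta_set k \<gamma> c0"
    show "\<eta> \<le> u"
    proof (cases "u \<le> m")
      case True
      hence "u \<in> S" using u by (auto simp: S_def eta_set_def f_def)
      thus ?thesis unfolding \<eta>_def by (rule cInf_lower[OF _ bb])
    next
      case False thus ?thesis using em by simp
    qed
  qed
  thus ?thesis using eE em by blast
qed

end
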